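(* Let $G=(V,E)$ be a connected graph, let $k$ be an integer with $1\le k\le |V|$, and let $D$, $A$, $\rho$, $\alpha$ and $d$ be as described in the context (in particular $|V\setminus D|\ge k$). Let $x$ be an optimal solution of the reduced ILP described in the context. Suppose the solution is sufficient, i.e. for every $v\in V\setminus A$ we have $x_{v,d(v)}=0$ or $d(v)\ge \mathrm{ecc}(v)$. Then $S^*=\{v\in V\setminus D : x_{v,0}=1\}$ satisfies $|S^*|=k$ and $$f(S^* )=\min\{f(S) : S\subseteq V,\ |S|=k\},$$ i.e. $S^*$ is a globally optimal solution of Group Closeness Centrality Maximization; moreover the optimal objective value of the reduced ILP equals $f(S^* )$.
   Context: All graphs are finite, undirected, unweighted, without self-loops, and connected. $\mathrm{dist}(u,v)$ is the shortest-path distance; for $S\subseteq V$ nonempty, $\mathrm{dist}(u,S)=\min_{s\in S}\mathrm{dist}(u,s)$. The group farness is $f(S)=\sum_{u\in V}\mathrm{dist}(u,S)$; Group Closeness Centrality Maximization asks for $S\subseteq V$ with $|S|=k$ maximizing $c(S)=(|V|-|S|)/f(S)$, equivalently minimizing $f(S)$. The eccentricity is $\mathrm{ecc}(v)=\max_{u\in V}\mathrm{dist}(u,v)$. $N[v]$ is the closed neighborhood of $v$; a vertex $u$ dominates $v$ if $N[v]\subseteq N[u]$. Data: (i) $D\subseteq V$ is a set of vertices such that every $v\in D$ is dominated by some vertex $u\in V\setminus D$, and $|V\setminus D|\ge k$. (ii) $A\subseteq D$ is a set of "absorbed" vertices with a map $\rho:A\to V\setminus A$ such that for every $u\in\rho(A)$,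 the set $\rho^{-1}(u)$ is a union of vertex sets of connected components of $G-u$, each such component is contained in $D$, and every vertex $w\in\rho^{-1}(u)$ is dominated by $u$. For $u\in V\setminus A$ let $\alpha(u)=|\rho^{-1}(u)|$ (so $\alpha(u)=0$ if $u\notin\rho(A)$). (iii) $d:V\setminus A\to\mathbb{Z}_{\ge 1}$ is any function. Reduced ILP: binary variables $x_{v,i}\in\{0,1\}$ for $v\in V\setminus A$ and $i\in\{0,\dots,d(v)\}$. Minimize $\sum_{v\in V\setminus A}\sum_{i=0}^{d(v)} x_{v,i}\,(\alpha(v)(i+1)+i)$ subject to (1) $\sum_{v\in V\setminus D} x_{v,0}=k$; (2) $\sum_{i=0}^{d(v)} x_{v,i}=1$ for all $v\in V\setminus A$; (3) $x_{v,i}\le \sum_{w\in V\setminus D:\ \mathrm{dist}(v,w)=i} x_{w,0}$ for all $v\in V\setminus A$ and all $i\in\{0,\dots,d(v)-1\}$ (an empty sum is $0$). The variable $x_{v,d(v)}$ is not subject to constraint (3); it encodes "$\mathrm{dist}(v,S)\ge d(v)$" where $S$ is the selected set. *)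

theory Defs
  imports Main
begin

definition simple_graph :: "'a set \<Rightarrow> ('a \<Rightarrow> 'a \<Rightarrow> bool) \<Rightarrow> bool" where
  "simple_graph V E \<longleftrightarrow> finite V \<and>
     (\<forall>u v. E u v \<longrightarrow> u \<in> V \<and> v \<in> V \<and> u \<noteq> v \<and> E v u)"

inductive walk_in :: "('a \<Rightarrow> 'a \<Rightarrow> bool) \<Rightarrow> 'a set \<Rightarrow> 'a \<Rightarrow> 'a \<Rightarrow> nat \<Rightarrow> bool"
  for E W where
  walk_nil: "u \<in> W \<Longrightarrow> walk_in E W u u 0"
| walk_cons: "E u w \<Longrightarrow> u \<in> W \<Longrightarrow> walk_in E W w v n \<Longrightarrow> walk_in E W u v (Suc n)"

definition connected_graph :: "'a set \<Rightarrow> ('a \<Rightarrow> 'a \<Rightarrow> bool) \<Rightarrow> bool" where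
  "connected_graph V E \<longleftrightarrow> simple_graph V E \<and> V \<noteq> {} \<and>
     (\<forall>u\<in>V. \<forall>v\<in>V. \<exists>n. walk_in E V u v n)"

definition gdist :: "'a set \<Rightarrow> ('a \<Rightarrow> 'a \<Rightarrow> bool) \<Rightarrow> 'a \<Rightarrow> 'a \<Rightarrow> nat" where
  "gdist V E u v = (LEAST n. walk_in E V u v n)"

text \<open>dist(u,S) for nonempty S.\<close>
definition gdist_set :: "'a set \<Rightarrow> ('a \<Rightarrow> 'a \<Rightarrow> bool) \<Rightarrow> 'a \<Rightarrow> 'a set \<Rightarrow> nat" where
  "gdist_set V E u S = Min ((\<lambda>s. gdist V E u s) ` S)"

definition farness :: "'a set \<Rightarrow> ('a \<Rightarrow> 'a \<Rightarrow> bool) \<Rightarrow> 'a set \<Rightarrow> nat" where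
  "farness V E S = (\<Sum>u\<in>V. gdist_set V E u S)"

definition ecc :: "'a set \<Rightarrow> ('a \<Rightarrow> 'a \<Rightarrow> bool) \<Rightarrow> 'a \<Rightarrow> nat" where
  "ecc V E v = Max ((\<lambda>u. gdist V E u v) ` V)"

definition closed_nbhd :: "('a \<Rightarrow> 'a \<Rightarrow> bool) \<Rightarrow> 'a \<Rightarrow> 'a set" where
  "closed_nbhd E v = insert v {u. E v u}"

definition dominates :: "('a \<Rightarrow> 'a \<Rightarrow> bool) \<Rightarrow> 'a \<Rightarrow> 'a \<Rightarrow> bool" where
  "dominates E u v \<longleftrightarrow> closed_nbhd E v \<subseteq> closed_nbhd E u"

definition comp_minus :: "'a set \<Rightarrow> ('a \<Rightarrow> 'a \<Rightarrow> bool) \<Rightarrow> 'a \<Rightarrow> 'a \<Rightarrow> 'a set" where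
  "comp_minus V E u w = {z. \<exists>n. walk_in E (V - {u}) w z n}"

definition valid_D :: "'a set \<Rightarrow> ('a \<Rightarrow> 'a \<Rightarrow> bool) \<Rightarrow> nat \<Rightarrow> 'a set \<Rightarrow> bool" where
  "valid_D V E k D \<longleftrightarrow> D \<subseteq> V \<and> (\<forall>v\<in>D. \<exists>u\<in>V - D. dominates E u v) \<and> card (V - D) \<ge> k"

definition valid_absorb ::
  "'a set \<Rightarrow> ('a \<Rightarrow> 'a \<Rightarrow> bool) \<Rightarrow> 'a set \<Rightarrow> 'a set \<Rightarrow> ('a \<Rightarrow> 'a) \<Rightarrow> bool" where
  "valid_absorb V E D A \<rho> \<longleftrightarrow> A \<subseteq> D \<and> \<rho> ` A \<subseteq> V - A \<and>
     (\<forall>u\<in>\<rho> ` A.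
        (\<forall>w\<in>{w\<in>A. \<rho> w = u}.
            comp_minus V E u w \<subseteq> {w'\<in>A. \<rho> w' = u} \<and>
            comp_minus V E u w \<subseteq> D \<and>
            dominates E u w))"

definition alpha :: "'a set \<Rightarrow> ('a \<Rightarrow> 'a) \<Rightarrow> 'a \<Rightarrow> nat" where
  "alpha A \<rho> u = card {w\<in>A. \<rho> w = u}"

text \<open>Reduced ILP. x v i is the 0/1 variable x_{v,i}; only v in V - A, i in {0..d v} matter.\<close>
definition ilp_feasible ::
  "'a set \<Rightarrow> ('a \<Rightarrow> 'a \<Rightarrow> bool) \<Rightarrow> nat \<Rightarrow> 'a set \<Rightarrow> 'a set \<Rightarrow> ('a \<Rightarrow> nat)
     \<Rightarrow> ('a \<Rightarrow> nat \<Rightarrow> nat) \<Rightarrow> bool" where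
  "ilp_feasible V E k D A d x \<longleftrightarrow>
     (\<forall>v\<in>V - A. \<forall>i\<in>{0..d v}. x v i \<in> {0, 1}) \<and>
     (\<Sum>v\<in>V - D. x v 0) = k \<and>
     (\<forall>v\<in>V - A. (\<Sum>i=0..d v. x v i) = 1) \<and>
     (\<forall>v\<in>V - A. \<forall>i\<in>{0..<d v}.
        x v i \<le> (\<Sum>w\<in>{w\<in>V - D. gdist V E v w = i}. x w 0))"

definition ilp_objective ::
  "'a set \<Rightarrow> 'a set \<Rightarrow> ('a \<Rightarrow> 'a) \<Rightarrow> ('a \<Rightarrow> nat) \<Rightarrow> ('a \<Rightarrow> nat \<Rightarrow> nat) \<Rightarrow> nat" where
  "ilp_objective V A \<rho> d x =
     (\<Sum>v\<in>V - A. \<Sum>i=0..d v. x v i * (alpha A \<rho> v * (i + 1) + i))"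

definition ilp_optimal ::
  "'a set \<Rightarrow> ('a \<Rightarrow> 'a \<Rightarrow> bool) \<Rightarrow> nat \<Rightarrow> 'a set \<Rightarrow> 'a set \<Rightarrow> ('a \<Rightarrow> 'a) \<Rightarrow> ('a \<Rightarrow> nat)
     \<Rightarrow> ('a \<Rightarrow> nat \<Rightarrow> nat) \<Rightarrow> bool" where
  "ilp_optimal V E k D A \<rho> d x \<longleftrightarrow> ilp_feasible V E k D A d x \<and>
     (\<forall>y. ilp_feasible V E k D A d y \<longrightarrow> ilp_objective V A \<rho> d x \<le> ilp_objective V A \<rho> d y)"

end

theory Submission
  imports Defs
begin



lemma walk_ends: "walk_in E W u v n \<Longrightarrow> u \<in> W \<and> v \<in> W"
  by (induction rule: walk_in.induct) auto

lemma walk_snoc: "walk_in E W x a m \<Longrightarrow> E a c \<Longrightarrow> c \<in> W \<Longrightarrow> walk_in E W x c (Suc m)"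
  by (induction rule: walk_in.induct) (auto intro: walk_in.intros)

lemma walk_rev:
  assumes sym: "\<And>a b. E a b \<Longrightarrow> E b a"
  shows "walk_in E W u v n \<Longrightarrow> walk_in E W v u n"
proof (induction rule: walk_in.induct)
  case (walk_nil u)
  then show ?case by (rule walk_in.walk_nil)
next
  case (walk_cons u w v n)
  then show ?case using walk_snoc sym by metis
qed

lemma sg: "connected_graph V E \<Longrightarrow> E a b \<Longrightarrow> a \<in> V \<and> b \<in> V \<and> a \<noteq> b \<and> E b a"
  unfolding connected_graph_def simple_graph_def by blast

lemma conn_fin: "connected_graph V E \<Longrightarrow> finite V"
  unfolding connected_graph_def simple_graph_def by blast

lemma walk_ex: "connected_graph V E \<Longrightarrow> u\<in>V \<Longrightarrow> v\<in>V \<Longrightarrow> walk_in E V u v (gdist V E u v)"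
  unfolding gdist_def connected_graph_def by (meson LeastI_ex)

lemma gdist_le: "walk_in E V u v n \<Longrightarrow> gdist V E u v \<le> n"
  unfolding gdist_def by (rule Least_le)

lemma gdist_sym: assumes "connected_graph V E" shows "gdist V E u v = gdist V E v u"
proof -
  have "walk_in E V u v = walk_in E V v u"
  proof (rule ext, rule iffI)
    have sy: "\<And>a b. E a b \<Longrightarrow> E b a" using sg[OF assms] by blast
    fix n
    show "walk_in E V u v n \<Longrightarrow> walk_in E V v u n" using walk_rev[of E, OF sy] by blast
    show "walk_in E V v u n \<Longrightarrow> walk_in E V u v n" using walk_rev[of E, OF sy] by blast
  qed
  then show ?thesis unfolding gdist_def by simp
qed

lemma gdist_0: assumes "connected_graph V E" "u\<in>V" "v\<in>V"
  shows "gdist V E u v = 0 \<longleftrightarrow> u = v"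
proof
  assume "gdist V E u v = 0"
  then have "walk_in E V u v 0" using walk_ex[OF assms] by simp
  then show "u = v" by (cases rule: walk_in.cases) auto
next
  assume "u = v"
  then show "gdist V E u v = 0" using gdist_le[OF walk_in.walk_nil[OF assms(2)]] by simp
qed

lemma gdist_edge: assumes "connected_graph V E" "E w u" "s \<in> V"
  shows "gdist V E w s \<le> Suc (gdist V E u s)"
proof -
  have "u \<in> V" "w \<in> V" using sg[OF assms(1,2)] by auto
  then have "walk_in E V u s (gdist V E u s)" using walk_ex assms by metis
  then have "walk_in E V w s (Suc (gdist V E u s))" using walk_in.walk_cons assms \<open>w\<in>V\<close> by metis
  then show ?thesis by (rule gdist_le)
qed

lemma dom_edge: assumes "connected_graph V E" "dominates E u v" "u \<noteq> v"
  shows "E u v"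
  using assms unfolding dominates_def closed_nbhd_def by auto

lemma gdist_dom: assumes c: "connected_graph V E" and dm: "dominates E u v" and "u \<noteq> v"
  and "u\<in>V" "v \<in> V" "z \<in> V" "z \<noteq> v"
  shows "gdist V E z u \<le> gdist V E z v"
proof -
  have w: "walk_in E V v z (gdist V E v z)" using walk_ex assms by metis
  have "gdist V E u z \<le> gdist V E v z"
    using w
  proof (cases rule: walk_in.cases)
    case walk_nil then show ?thesis using assms by simp
  next
    case (walk_cons c m)
    have "c \<in> closed_nbhd E u" using dm walk_cons unfolding dominates_def closed_nbhd_def by auto
    then have "c = u \<or> E u c" unfolding closed_nbhd_def by auto
    then show ?thesis
    proof
      assume "c = u" then show ?thesis using walk_cons gdist_le by fastforce
    next
      assume "E u c" then have "walk_in E V u z (Suc m)" using walk_cons walk_in.walk_cons \<open>u\<in>V\<close> by metis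
      then show ?thesis using walk_cons gdist_le by fastforce
    qed
  qed
  then show ?thesis using gdist_sym[OF c] by metis
qed

lemma gdist_set_le: "finite S \<Longrightarrow> s \<in> S \<Longrightarrow> gdist_set V E z S \<le> gdist V E z s"
  unfolding gdist_set_def by simp

lemma gdist_set_ex: "finite S \<Longrightarrow> S \<noteq> {} \<Longrightarrow> \<exists>s\<in>S. gdist_set V E z S = gdist V E z s"
proof -
  assume "finite S" "S \<noteq> {}"
  then have "Min ((\<lambda>s. gdist V E z s) ` S) \<in> (\<lambda>s. gdist V E z s) ` S" by (intro Min_in) auto
  then show ?thesis unfolding gdist_set_def by auto
qed

lemma gdist_set_0: assumes "connected_graph V E" "z \<in> V" "S \<subseteq> V" "finite S" "S \<noteq> {}"
  shows "gdist_set V E z S = 0 \<longleftrightarrow> z \<in> S"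
proof
  assume "gdist_set V E z S = 0"
  then obtain s where "s \<in> S" "gdist V E z s = 0" using gdist_set_ex[OF assms(4,5)] by metis
  then show "z \<in> S" using gdist_0 assms by (metis subsetD)
next
  assume "z \<in> S"
  then show "gdist_set V E z S = 0" using gdist_set_le[OF assms(4) \<open>z\<in>S\<close>, of V E z] gdist_0[OF assms(1,2,2)] by simp
qed

lemma gdist_set_mono:
  assumes "finite S" "S \<noteq> {}" "finite S'" "\<forall>s\<in>S. \<exists>s'\<in>S'. gdist V E z s' \<le> gdist V E z s"
  shows "gdist_set V E z S' \<le> gdist_set V E z S"
proof -
  obtain s where "s \<in> S" "gdist_set V E z S = gdist V E z s" using gdist_set_ex assms by metis
  moreover obtain s' where "s' \<in> S'" "gdist V E z s' \<le> gdist V E z s" using assms \<open>s\<in>S\<close> by metis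
  ultimately show ?thesis using gdist_set_le[OF assms(3) \<open>s'\<in>S'\<close>, of V E z] by linarith
qed



lemma reduce:
  assumes c: "connected_graph V E" and D: "valid_D V E k D" and k: "1 \<le> k"
  shows "S \<subseteq> V \<Longrightarrow> card S = k \<Longrightarrow>
    \<exists>S'. S' \<subseteq> V - D \<and> card S' = k \<and> farness V E S' \<le> farness V E S"
proof (induction "card (S \<inter> D)" arbitrary: S rule: less_induct)
  case less
  have fV: "finite V" using conn_fin[OF c] .
  have fS: "finite S" using less.prems fV finite_subset by blast
  show ?case
  proof (cases "S \<inter> D = {}")
    case True then show ?thesis using less.prems by blast
  next
    case False
    then obtain v where v: "v \<in> S" "v \<in> D" by blast
    obtain u where u: "u \<in> V - D" "dominates E u v" using D v unfolding valid_D_def by blast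
    have uv: "u \<noteq> v" using u v by blast
    have vV: "v \<in> V" using v less.prems by blast
    have Euv: "E u v" using dom_edge[OF c u(2) uv] .
    obtain t where t: "t \<in> V - D" "t \<notin> S" "u \<in> insert t (S - {v})"
    proof (cases "u \<in> S")
      case False then show ?thesis using that u by blast
    next
      case True
      have "S \<inter> (V - D) \<subseteq> S - {v}" using v by blast
      then have "card (S \<inter> (V - D)) \<le> card (S - {v})" using fS by (intro card_mono) auto
      also have "\<dots> < k" using fS v less.prems k by simp
      finally have lt: "card (S \<inter> (V - D)) < card (V - D)" using D unfolding valid_D_def by linarith
      have "\<not> (V - D \<subseteq> S)"
      proof
        assume "V - D \<subseteq> S"
        then have "S \<inter> (V - D) = V - D" by blast
        then show False using lt by simp
      qed
      then obtain t where "t \<in> V - D" "t \<notin> S" by blast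
      then show ?thesis using that True uv by blast
    qed
    define S1 where "S1 = insert t (S - {v})"
    have tv: "t \<noteq> v" using t v by blast
    have uS1: "u \<in> S1" using S1_def t(3) by simp
    have uV: "u \<in> V" using u by blast
    have Evu: "E v u" using sg[OF c Euv] by blast
    have S1V: "S1 \<subseteq> V" using S1_def t less.prems by blast
    have fS1: "finite S1" using S1_def fS by simp
    have S1ne: "S1 \<noteq> {}" using S1_def by simp
    have Sne: "S \<noteq> {}" using v by blast
    have cS1: "card S1 = k" using S1_def fS t v less.prems k by (simp add: card_insert_if)
    have "S1 \<inter> D = (S \<inter> D) - {v}" using S1_def t by blast
    then have lt: "card (S1 \<inter> D) < card (S \<inter> D)" proof -
      have "finite (S \<inter> D)" "v \<in> S \<inter> D" using fS v by auto
      then show ?thesis using card_Diff1_less \<open>S1 \<inter> D = (S \<inter> D) - {v}\<close> by metis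
    qed
    have pt: "gdist_set V E z S1 + (if z = t then 1 else 0) \<le> gdist_set V E z S + (if z = v then 1 else 0)"
      if zV: "z \<in> V" for z
    proof -
      consider "z = t" | "z = v" | "z \<noteq> t" "z \<noteq> v" by blast
      then show ?thesis
      proof cases
        case 1
        have "gdist_set V E z S1 = 0" using gdist_set_0[OF c zV S1V fS1 S1ne] 1 S1_def by simp
        moreover have "gdist_set V E z S \<noteq> 0" using gdist_set_0[OF c zV less.prems(1) fS Sne] 1 t by simp
        ultimately show ?thesis using 1 tv by simp
      next
        case 2
        have "gdist_set V E z S1 \<le> gdist V E z u" using gdist_set_le[OF fS1 uS1] by simp
        also have "\<dots> \<le> Suc (gdist V E u u)" using gdist_edge[OF c Evu uV] 2 by simp
        also have "\<dots> = 1" using gdist_0[OF c] u by simp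
        finally show ?thesis using 2 tv by simp
      next
        case 3
        have "gdist_set V E z S1 \<le> gdist_set V E z S"
        proof (rule gdist_set_mono[OF fS Sne fS1], intro ballI)
          fix s assume s: "s \<in> S"
          show "\<exists>s'\<in>S1. gdist V E z s' \<le> gdist V E z s"
          proof (cases "s = v")
            case True
            have "gdist V E z u \<le> gdist V E z s" using gdist_dom[OF c u(2) uv uV vV zV 3(2)] True by simp
            then show ?thesis using uS1 by blast
          next
            case False then show ?thesis using s S1_def by blast
          qed
        qed
        then show ?thesis using 3 by simp
      qed
    qed
    have i1: "(\<Sum>z\<in>V. (if z = t then 1 else 0)) = (1::nat)" using t fV by simp
    have i2: "(\<Sum>z\<in>V. (if z = v then 1 else 0)) = (1::nat)" using vV fV by simp
    have "farness V E S1 + 1 = (\<Sum>z\<in>V. gdist_set V E z S1 + (if z = t then 1 else 0))"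
      unfolding farness_def sum.distrib i1 ..
    also have "\<dots> \<le> (\<Sum>z\<in>V. gdist_set V E z S + (if z = v then 1 else 0))"
      by (rule sum_mono) (rule pt)
    also have "\<dots> = farness V E S + 1"
      unfolding farness_def sum.distrib i2 ..
    finally have le1: "farness V E S1 \<le> farness V E S" by simp
    obtain S' where S': "S' \<subseteq> V - D" "card S' = k" "farness V E S' \<le> farness V E S1"
      using less.hyps[OF lt S1V cS1] by blast
    show ?thesis by (rule exI[of _ S']) (use S' le1 in simp)
  qed
qed

lemma through:
  assumes c: "connected_graph V E"
  shows "walk_in E V a b n \<Longrightarrow> (\<exists>m. walk_in E (V - {u}) w a m) \<Longrightarrow> b \<notin> comp_minus V E u w
     \<Longrightarrow> \<exists>m. Suc m \<le> n \<and> walk_in E V u b m"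
proof (induction rule: walk_in.induct)
  case (walk_nil a)
  then show ?case unfolding comp_minus_def by blast
next
  case (walk_cons a c b n)
  show ?case
  proof (cases "c = u")
    case True then show ?thesis using walk_cons by blast
  next
    case False
    have "c \<in> V" using sg[OF assms walk_cons(1)] by blast
    then obtain m where "walk_in E (V - {u}) w a m" using walk_cons by blast
    then have "walk_in E (V - {u}) w c (Suc m)" using walk_snoc \<open>c\<in>V\<close> False walk_cons(1) by fastforce
    then obtain m' where "Suc m' \<le> n" "walk_in E V u b m'" using walk_cons by blast
    then show ?thesis by (intro exI[of _ m']) simp
  qed
qed

lemma absorbed_dist:
  assumes c: "connected_graph V E" and D: "valid_D V E k D" and A: "valid_absorb V E D A \<rho>"
    and w: "w \<in> A" and S: "S \<subseteq> V - D" "S \<noteq> {}"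
  shows "gdist_set V E w S = gdist_set V E (\<rho> w) S + 1"
proof -
  define u where "u = \<rho> w"
  have fS: "finite S" using S conn_fin[OF c] finite_subset by blast
  have uA: "u \<in> V - A" "u \<in> \<rho> ` A" using A w u_def unfolding valid_absorb_def by auto
  have props: "comp_minus V E u w \<subseteq> D" "dominates E u w"
    using A w uA u_def unfolding valid_absorb_def by auto
  have wD: "w \<in> D" "w \<in> V" using A D w unfolding valid_absorb_def valid_D_def by auto
  have uw: "u \<noteq> w" using uA w by blast
  have Ewu: "E w u" using dom_edge[OF c props(2) uw] sg[OF c] by blast
  have each: "gdist V E w s = gdist V E u s + 1" if s: "s \<in> S" for s
  proof (rule antisym)
    have sV: "s \<in> V" using s S by blast
    show "gdist V E w s \<le> gdist V E u s + 1" using gdist_edge[OF c Ewu sV] by simp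
    have wk: "walk_in E V w s (gdist V E w s)" using walk_ex[OF c wD(2) sV] .
    have "walk_in E (V - {u}) w w 0" using wD uw by (intro walk_in.walk_nil) auto
    moreover have "s \<notin> comp_minus V E u w" using props s S by blast
    ultimately obtain m where "Suc m \<le> gdist V E w s" "walk_in E V u s m"
      using through[OF c wk] by blast
    then show "gdist V E u s + 1 \<le> gdist V E w s" using gdist_le by fastforce
  qed
  have "gdist_set V E w S = Min ((\<lambda>x. x + 1) ` ((\<lambda>s. gdist V E u s) ` S))"
    unfolding gdist_set_def image_image using each by (metis (no_types, lifting) image_cong)
  also have "\<dots> = Min ((\<lambda>s. gdist V E u s) ` S) + 1"
    by (rule mono_Min_commute[symmetric]) (use fS S in \<open>auto simp: mono_def\<close>)
  finally show ?thesis unfolding gdist_set_def u_def .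
qed

lemma farness_split:
  assumes c: "connected_graph V E" and D: "valid_D V E k D" and A: "valid_absorb V E D A \<rho>"
    and S: "S \<subseteq> V - D" "S \<noteq> {}"
  shows "farness V E S = (\<Sum>v\<in>V - A. alpha A \<rho> v * (gdist_set V E v S + 1) + gdist_set V E v S)"
proof -
  let ?g = "\<lambda>z. gdist_set V E z S"
  have fV: "finite V" using conn_fin[OF c] .
  have AV: "A \<subseteq> V" using A D unfolding valid_absorb_def valid_D_def by blast
  have fA: "finite A" using AV fV finite_subset by blast
  have rA: "\<rho> ` A \<subseteq> V - A" using A unfolding valid_absorb_def by blast
  have "farness V E S = sum ?g (V - A) + sum ?g A"
    unfolding farness_def by (rule sum.subset_diff[OF AV fV])
  also have "sum ?g A = (\<Sum>w\<in>A. ?g (\<rho> w) + 1)"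
    using absorbed_dist[OF c D A _ S] by simp
  also have "\<dots> = (\<Sum>u\<in>\<rho> ` A. \<Sum>w\<in>{w. w \<in> A \<and> \<rho> w = u}. ?g (\<rho> w) + 1)"
    by (rule sum.image_gen[OF fA])
  also have "\<dots> = (\<Sum>u\<in>\<rho> ` A. alpha A \<rho> u * (?g u + 1))"
  proof (rule sum.cong[OF refl])
    fix u assume "u \<in> \<rho> ` A"
    have "(\<Sum>w\<in>{w. w \<in> A \<and> \<rho> w = u}. ?g (\<rho> w) + 1) = (\<Sum>w\<in>{w. w \<in> A \<and> \<rho> w = u}. ?g u + 1)"
      by (rule sum.cong) auto
    then show "(\<Sum>w\<in>{w. w \<in> A \<and> \<rho> w = u}. ?g (\<rho> w) + 1) = alpha A \<rho> u * (?g u + 1)"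
      unfolding alpha_def by simp
  qed
  also have "\<dots> = (\<Sum>u\<in>V - A. alpha A \<rho> u * (?g u + 1))"
  proof (rule sum.mono_neutral_left)
    show "finite (V - A)" using fV by simp
    show "\<rho> ` A \<subseteq> V - A" by (rule rA)
    show "\<forall>i\<in>V - A - \<rho> ` A. alpha A \<rho> i * (?g i + 1) = 0"
    proof
      fix i assume "i \<in> V - A - \<rho> ` A"
      then have "{w \<in> A. \<rho> w = i} = {}" by blast
      then have "alpha A \<rho> i = 0" unfolding alpha_def by (simp only: card.empty)
      then show "alpha A \<rho> i * (?g i + 1) = 0" by simp
    qed
  qed
  finally show ?thesis by (simp add: sum.distrib add.commute)
qed



lemma onehot:
  fixes f :: "'b \<Rightarrow> nat"
  assumes "finite I" "\<forall>i\<in>I. f i \<in> {0,1}" "sum f I = 1"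
  shows "\<exists>j\<in>I. f j = 1 \<and> (\<forall>i\<in>I. i \<noteq> j \<longrightarrow> f i = 0)"
proof -
  obtain j where j: "j \<in> I" "f j \<noteq> 0" using assms(3) by (metis sum.neutral zero_neq_one)
  then have fj: "f j = 1" using assms(2) by auto
  have "sum f I = f j + sum f (I - {j})" using sum.remove[OF assms(1) j(1)] .
  then have "sum f (I - {j}) = 0" using fj assms(3) by simp
  then have "\<forall>i\<in>I - {j}. f i = 0" using assms(1) by simp
  then show ?thesis using j fj by blast
qed

lemma onehot_sum:
  fixes f :: "'b \<Rightarrow> nat"
  assumes "finite I" "j \<in> I" "f j = 1" "\<forall>i\<in>I. i \<noteq> j \<longrightarrow> f i = 0"
  shows "(\<Sum>i\<in>I. f i * c i) = c j"
proof -
  have "(\<Sum>i\<in>I. f i * c i) = (\<Sum>i\<in>I. if i = j then c i else 0)"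
    by (rule sum.cong) (use assms in auto)
  also have "\<dots> = c j" using assms by simp
  finally show ?thesis .
qed

lemma upper:
  assumes c: "connected_graph V E" and D: "valid_D V E k D" and A: "valid_absorb V E D A \<rho>"
    and d_pos: "\<forall>v\<in>V - A. d v \<ge> 1"
    and S: "S \<subseteq> V - D" "card S = k" and k: "1 \<le> k"
  defines "y \<equiv> (\<lambda>v i. if i = min (gdist_set V E v S) (d v) then 1 else 0 :: nat)"
  shows "ilp_feasible V E k D A d y \<and> ilp_objective V A \<rho> d y \<le> farness V E S"
proof -
  have fV: "finite V" using conn_fin[OF c] .
  have fS: "finite S" using S fV finite_subset by blast
  have Sne: "S \<noteq> {}" using S k by auto
  have SV: "S \<subseteq> V" using S by blast
  have AD: "A \<subseteq> D" using A unfolding valid_absorb_def by blast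
  let ?g = "\<lambda>v. gdist_set V E v S"
  have y0: "y v 0 = (if v \<in> S then 1 else 0)" if v: "v \<in> V - D" for v
  proof -
    have "d v \<ge> 1" using d_pos v AD by blast
    then have "(0 = min (?g v) (d v)) = (?g v = 0)" by auto
    also have "\<dots> = (v \<in> S)" using gdist_set_0[OF c _ SV fS Sne] v by blast
    finally show ?thesis unfolding y_def by simp
  qed
  have f1: "\<forall>v\<in>V - A. \<forall>i\<in>{0..d v}. y v i \<in> {0, 1}" unfolding y_def by simp
  have "(\<Sum>v\<in>V - D. y v 0) = (\<Sum>v\<in>V - D. if v \<in> S then 1 else 0)"
    by (rule sum.cong) (use y0 in auto)
  also have "\<dots> = card {v \<in> V - D. v \<in> S}"
    unfolding card_eq_sum using sum.inter_filter[of "V - D" "\<lambda>_. 1::nat" "\<lambda>v. v \<in> S"] fV by simp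
  also have "{v \<in> V - D. v \<in> S} = S" using S by blast
  finally have f2: "(\<Sum>v\<in>V - D. y v 0) = k" using S by simp
  have f3: "\<forall>v\<in>V - A. (\<Sum>i=0..d v. y v i) = 1" unfolding y_def by simp
  have f4: "\<forall>v\<in>V - A. \<forall>i\<in>{0..<d v}. y v i \<le> (\<Sum>w\<in>{w\<in>V - D. gdist V E v w = i}. y w 0)"
  proof (intro ballI)
    fix v i assume v: "v \<in> V - A" and i: "i \<in> {0..<d v}"
    show "y v i \<le> (\<Sum>w\<in>{w\<in>V - D. gdist V E v w = i}. y w 0)"
    proof (cases "i = min (?g v) (d v)")
      case False then show ?thesis unfolding y_def by simp
    next
      case True
      then have gi: "?g v = i" using i by auto
      obtain s where s: "s \<in> S" "?g v = gdist V E v s" using gdist_set_ex[OF fS Sne] by metis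
      have sin: "s \<in> {w\<in>V - D. gdist V E v w = i}" using s S gi by auto
      have "y s 0 = 1" using y0[of s] s S by auto
      moreover have "y s 0 \<le> (\<Sum>w\<in>{w\<in>V - D. gdist V E v w = i}. y w 0)"
        by (rule member_le_sum[OF sin]) (use fV in auto)
      ultimately show ?thesis unfolding y_def by auto
    qed
  qed
  have feas: "ilp_feasible V E k D A d y" unfolding ilp_feasible_def using f1 f2 f3 f4 by blast
  have "ilp_objective V A \<rho> d y = (\<Sum>v\<in>V - A. alpha A \<rho> v * (min (?g v) (d v) + 1) + min (?g v) (d v))"
    unfolding ilp_objective_def
  proof (rule sum.cong[OF refl])
    fix v assume "v \<in> V - A"
    show "(\<Sum>i = 0..d v. y v i * (alpha A \<rho> v * (i + 1) + i)) =
        alpha A \<rho> v * (min (?g v) (d v) + 1) + min (?g v) (d v)"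
      by (rule onehot_sum[where c = "\<lambda>i. alpha A \<rho> v * (i + 1) + i"]) (auto simp: y_def)
  qed
  also have "\<dots> \<le> (\<Sum>v\<in>V - A. alpha A \<rho> v * (?g v + 1) + ?g v)"
    by (rule sum_mono) (intro add_mono mult_le_mono; simp)
  also have "\<dots> = farness V E S" using farness_split[OF c D A S(1) Sne] by simp
  finally show ?thesis using feas by simp
qed



theorem mainTheorem1:
  fixes V :: "'a set" and E :: "'a \<Rightarrow> 'a \<Rightarrow> bool" and k :: nat
    and D A :: "'a set" and \<rho> :: "'a \<Rightarrow> 'a" and d :: "'a \<Rightarrow> nat"
    and x :: "'a \<Rightarrow> nat \<Rightarrow> nat"
  assumes conn: "connected_graph V E"
    and k: "1 \<le> k" "k \<le> card V"
    and D: "valid_D V E k D"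
    and A: "valid_absorb V E D A \<rho>"
    and d_pos: "\<forall>v\<in>V - A. d v \<ge> 1"
    and opt: "ilp_optimal V E k D A \<rho> d x"
    and sufficient: "\<forall>v\<in>V - A. x v (d v) = 0 \<or> d v \<ge> ecc V E v"
  shows "card {v\<in>V - D. x v 0 = 1} = k \<and>
         farness V E {v\<in>V - D. x v 0 = 1} = Min {farness V E S | S. S \<subseteq> V \<and> card S = k} \<and>
         ilp_objective V A \<rho> d x = farness V E {v\<in>V - D. x v 0 = 1}"
proof -
  define Ss where "Ss = {v\<in>V - D. x v 0 = 1}"
  have fV: "finite V" using conn_fin[OF conn] .
  have AD: "A \<subseteq> D" using A unfolding valid_absorb_def by blast
  have feas: "ilp_feasible V E k D A d x" using opt unfolding ilp_optimal_def by blast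
  have xbin: "\<forall>v\<in>V - A. \<forall>i\<in>{0..d v}. x v i \<in> {0, 1}"
    and xk: "(\<Sum>v\<in>V - D. x v 0) = k"
    and xone: "\<forall>v\<in>V - A. (\<Sum>i=0..d v. x v i) = 1"
    and xc: "\<forall>v\<in>V - A. \<forall>i\<in>{0..<d v}. x v i \<le> (\<Sum>w\<in>{w\<in>V - D. gdist V E v w = i}. x w 0)"
    using feas unfolding ilp_feasible_def by blast+
  have x0: "x v 0 \<in> {0,1}" if "v \<in> V - D" for v
  proof -
    have vA: "v \<in> V - A" using that AD by blast
    have z: "(0::nat) \<in> {0..d v}" by simp
    show ?thesis using xbin vA z by (simp only: Ball_def)
  qed
  have "(\<Sum>v\<in>V - D. x v 0) = (\<Sum>v\<in>V - D. if x v 0 = 1 then 1 else 0)"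
    by (rule sum.cong) (use x0 in auto)
  also have "\<dots> = card Ss"
    unfolding card_eq_sum Ss_def using sum.inter_filter[of "V - D" "\<lambda>_. 1::nat" "\<lambda>v. x v 0 = 1"] fV by simp
  finally have cardS: "card Ss = k" using xk by simp
  have SsD: "Ss \<subseteq> V - D" unfolding Ss_def by blast
  have Ssne: "Ss \<noteq> {}" using cardS k by auto
  have fSs: "finite Ss" using SsD fV finite_subset by blast
  let ?g = "\<lambda>v. gdist_set V E v Ss"
  let ?c = "\<lambda>v i. alpha A \<rho> v * (i + 1) + i"
  have lower: "farness V E Ss \<le> ilp_objective V A \<rho> d x"
  proof -
    have "farness V E Ss = (\<Sum>v\<in>V - A. ?c v (?g v))"
      using farness_split[OF conn D A SsD Ssne] by simp
    also have "\<dots> \<le> ilp_objective V A \<rho> d x"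
      unfolding ilp_objective_def
    proof (rule sum_mono)
      fix v assume v: "v \<in> V - A"
      obtain j where j: "j \<in> {0..d v}" "x v j = 1" "\<forall>i\<in>{0..d v}. i \<noteq> j \<longrightarrow> x v i = 0"
      proof -
        have b1: "\<forall>i\<in>{0..d v}. x v i \<in> {0,1}" using xbin v by (rule bspec)
        have b2: "(\<Sum>i=0..d v. x v i) = 1" using xone v by (rule bspec)
        show ?thesis using onehot[OF _ b1 b2] that by blast
      qed
      have eq: "(\<Sum>i=0..d v. x v i * ?c v i) = ?c v j"
        by (rule onehot_sum[OF _ j(1) j(2) j(3)]) simp
      have "?g v \<le> j"
      proof (cases "j < d v")
        case True
        then have jj: "j \<in> {0..<d v}" by simp
        have "x v j \<le> (\<Sum>w\<in>{w\<in>V - D. gdist V E v w = j}. x w 0)" using bspec[OF bspec[OF xc v] jj] .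
        then have "1 \<le> (\<Sum>w\<in>{w\<in>V - D. gdist V E v w = j}. x w 0)" using j(2) by simp
        then have "(\<Sum>w\<in>{w\<in>V - D. gdist V E v w = j}. x w 0) \<noteq> 0" by linarith
        then obtain w where w: "w \<in> {w\<in>V - D. gdist V E v w = j}" "x w 0 \<noteq> 0"
        proof -
          let ?W = "{w\<in>V - D. gdist V E v w = j}"
          have "\<not> (\<forall>w\<in>?W. x w 0 = 0)"
            using sum.neutral[of ?W "\<lambda>w. x w 0"] \<open>(\<Sum>w\<in>?W. x w 0) \<noteq> 0\<close> by argo
          then show ?thesis using that by auto
        qed
        have wD: "w \<in> V - D" using w(1) by simp
        have "x w 0 = 1" using x0[OF wD] w(2) by simp
        then have wS: "w \<in> Ss" using wD unfolding Ss_def by simp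
        show ?thesis using gdist_set_le[OF fSs wS, of V E v] w(1) by simp
      next
        case False
        then have jd: "j = d v" using j by simp
        then have "x v (d v) \<noteq> 0" using j(2) by simp
        then have "d v \<ge> ecc V E v" using bspec[OF sufficient v] by simp
        obtain s where s: "s \<in> Ss" using Ssne by blast
        have sV: "s \<in> V" using s SsD by blast
        have "?g v \<le> gdist V E v s" using gdist_set_le[OF fSs s] .
        also have "\<dots> = gdist V E s v" using gdist_sym[OF conn] .
        also have "\<dots> \<le> ecc V E v" unfolding ecc_def by (rule Max_ge) (use fV sV in auto)
        finally show ?thesis using jd \<open>d v \<ge> ecc V E v\<close> by simp
      qed
      then have "?g v + 1 \<le> j + 1" by simp
      then have "alpha A \<rho> v * (?g v + 1) \<le> alpha A \<rho> v * (j + 1)" by (rule mult_le_mono2)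
      then have "?c v (?g v) \<le> ?c v j" using \<open>?g v \<le> j\<close> by (rule add_mono)
      then show "?c v (?g v) \<le> (\<Sum>i=0..d v. x v i * ?c v i)" using eq by simp
    qed
    finally show ?thesis .
  qed
  have upperS: "ilp_objective V A \<rho> d x \<le> farness V E S" if S: "S \<subseteq> V - D" "card S = k" for S
  proof -
    obtain y where y: "ilp_feasible V E k D A d y" "ilp_objective V A \<rho> d y \<le> farness V E S"
      using upper[OF conn D A d_pos S k(1)] by blast
    have "ilp_objective V A \<rho> d x \<le> ilp_objective V A \<rho> d y" using opt y(1) unfolding ilp_optimal_def by blast
    then show ?thesis using y(2) by simp
  qed
  have objeq: "ilp_objective V A \<rho> d x = farness V E Ss"
    using lower upperS[OF SsD cardS] by simp
  have allS: "farness V E Ss \<le> farness V E S" if S: "S \<subseteq> V" "card S = k" for S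
  proof -
    obtain S' where S': "S' \<subseteq> V - D" "card S' = k" "farness V E S' \<le> farness V E S"
      using reduce[OF conn D k(1) S] by blast
    show ?thesis using objeq upperS[OF S'(1,2)] S'(3) by simp
  qed
  have fin: "finite {farness V E S | S. S \<subseteq> V \<and> card S = k}"
  proof -
    have "{farness V E S | S. S \<subseteq> V \<and> card S = k} \<subseteq> farness V E ` Pow V" by blast
    then show ?thesis using fV finite_subset by blast
  qed
  have "Min {farness V E S | S. S \<subseteq> V \<and> card S = k} = farness V E Ss"
  proof (rule Min_eqI[OF fin])
    show "\<And>y. y \<in> {farness V E S | S. S \<subseteq> V \<and> card S = k} \<Longrightarrow> farness V E Ss \<le> y"
      using allS by blast
    show "farness V E Ss \<in> {farness V E S | S. S \<subseteq> V \<and> card S = k}"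
      using SsD cardS by blast
  qed
  then show ?thesis using cardS objeq unfolding Ss_def by simp
qed

end
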